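(* Let $p$ be a prime, $e\ge1$, and $G$ a finite abelian group of order $p^e$. Let $\psi^p\colon\mathbf{Z}[G]\to\mathbf{Z}[G]$ be the ring homomorphism with $\psi^p(g)=g^p$, and let $h(t)=\frac{1}{1-t}\left(p-\frac{1-t^p}{1-t}\right)$, a polynomial of degree $p-2$. Then $$\psi^p(b_1)=b_1+\sum_{\tau\neq1,\ \psi\tau=1}h(y_\tau)\,b_\tau,$$ where the sum runs over one representative $\tau$ of each equivalence class of nontrivial representations with $\psi\tau=1$.
   Context: A representation is a group homomorphism $\tau\colon G\to\mathbf{C}^*$; two representations are equivalent if they have the same kernel. $\psi\tau$ is the representation $x\mapsto\tau(x^p)$, and $1$ denotes the trivial representation. Write $\omega=\exp(2\pi i/p)$. For $\tau$ nontrivial, $b_\tau=\sum_{x\in G,\ \tau(x)=1}x-\sum_{\xi\in G,\ \tau(\xi)=\omega}\xi$ and $y_\tau\in G$ is a fixed element with $\tau(y_\tau)=\omega$; $b_1=\sum_{x\in G}x$. *)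

theory Defs
  imports Complex_Main "HOL-Algebra.Group" "HOL-Computational_Algebra.Polynomial"
begin

(* Elements of the integral group ring Z[G] of a finite group G are represented as
   functions 'a => int (coefficient of each group element), vanishing off carrier G. *)

definition gr_basis :: "('a, 'b) monoid_scheme \<Rightarrow> 'a \<Rightarrow> ('a \<Rightarrow> int)" where
  "gr_basis G g = (\<lambda>z. if z = g \<and> g \<in> carrier G then 1 else 0)"

definition gr_add :: "('a \<Rightarrow> int) \<Rightarrow> ('a \<Rightarrow> int) \<Rightarrow> ('a \<Rightarrow> int)" where
  "gr_add f h = (\<lambda>z. f z + h z)"

definition gr_mult :: "('a, 'b) monoid_scheme \<Rightarrow> ('a \<Rightarrow> int) \<Rightarrow> ('a \<Rightarrow> int) \<Rightarrow> ('a \<Rightarrow> int)" where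
  "gr_mult G f h = (\<lambda>z. if z \<in> carrier G
      then (\<Sum>x\<in>carrier G. f x * h (z \<otimes>\<^bsub>G\<^esub> inv\<^bsub>G\<^esub> x)) else 0)"

definition gr_sum :: "('i \<Rightarrow> ('a \<Rightarrow> int)) \<Rightarrow> 'i set \<Rightarrow> ('a \<Rightarrow> int)" where
  "gr_sum F I = (\<lambda>z. \<Sum>i\<in>I. F i z)"

definition psi_gr :: "('a, 'b) monoid_scheme \<Rightarrow> nat \<Rightarrow> ('a \<Rightarrow> int) \<Rightarrow> ('a \<Rightarrow> int)" where
  "psi_gr G p f = (\<lambda>z. \<Sum>x\<in>carrier G. if x [^]\<^bsub>G\<^esub> p = z then f x else 0)"

definition gr_poly_eval :: "('a, 'b) monoid_scheme \<Rightarrow> int poly \<Rightarrow> 'a \<Rightarrow> ('a \<Rightarrow> int)" where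
  "gr_poly_eval G q y =
     (\<lambda>z. \<Sum>i\<le>degree q. coeff q i * gr_basis G (y [^]\<^bsub>G\<^esub> i) z)"

(* h(t) = (1/(1-t)) (p - (1-t^p)/(1-t)), computed by exact division in Z[t] *)
definition h_poly :: "nat \<Rightarrow> int poly" where
  "h_poly p = ([:int p:] - ([:1:] - monom 1 p) div [:1, -1:]) div [:1, -1:]"

definition is_rep :: "('a, 'b) monoid_scheme \<Rightarrow> ('a \<Rightarrow> complex) \<Rightarrow> bool" where
  "is_rep G \<tau> \<longleftrightarrow> (\<forall>x\<in>carrier G. \<tau> x \<noteq> 0) \<and>
     (\<forall>x\<in>carrier G. \<forall>y\<in>carrier G. \<tau> (x \<otimes>\<^bsub>G\<^esub> y) = \<tau> x * \<tau> y)"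

definition rep_trivial :: "('a, 'b) monoid_scheme \<Rightarrow> ('a \<Rightarrow> complex) \<Rightarrow> bool" where
  "rep_trivial G \<tau> \<longleftrightarrow> (\<forall>x\<in>carrier G. \<tau> x = 1)"

definition psi_rep :: "('a, 'b) monoid_scheme \<Rightarrow> nat \<Rightarrow> ('a \<Rightarrow> complex) \<Rightarrow> ('a \<Rightarrow> complex)" where
  "psi_rep G p \<tau> = (\<lambda>x. \<tau> (x [^]\<^bsub>G\<^esub> p))"

definition rep_kernel :: "('a, 'b) monoid_scheme \<Rightarrow> ('a \<Rightarrow> complex) \<Rightarrow> 'a set" where
  "rep_kernel G \<tau> = {x \<in> carrier G. \<tau> x = 1}"

definition rep_equiv :: "('a, 'b) monoid_scheme \<Rightarrow> ('a \<Rightarrow> complex) \<Rightarrow> ('a \<Rightarrow> complex) \<Rightarrow> bool" where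
  "rep_equiv G \<sigma> \<tau> \<longleftrightarrow> rep_kernel G \<sigma> = rep_kernel G \<tau>"

definition omega :: "nat \<Rightarrow> complex" where
  "omega p = exp (2 * of_real pi * \<i> / of_nat p)"

definition b_one :: "('a, 'b) monoid_scheme \<Rightarrow> ('a \<Rightarrow> int)" where
  "b_one G = (\<lambda>z. if z \<in> carrier G then 1 else 0)"

definition b_rep :: "('a, 'b) monoid_scheme \<Rightarrow> nat \<Rightarrow> ('a \<Rightarrow> complex) \<Rightarrow> ('a \<Rightarrow> int)" where
  "b_rep G p \<tau> = (\<lambda>z. if z \<in> carrier G
      then (if \<tau> z = 1 then 1 else 0) - (if \<tau> z = omega p then 1 else 0) else 0)"

end

theory Submission imports Defs "HOL-Analysis.Complex_Transcendental" "HOL-Number_Theory.Cong"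
begin



lemma omega_pow: "omega p ^ j = exp(2 * of_real pi * \<i> * of_nat j / of_nat p)"
  unfolding omega_def exp_of_nat_mult[symmetric] by (simp add: mult_ac)

lemma omega_pow_eq: "p \<ge> 1 \<Longrightarrow> omega p ^ j = omega p ^ k \<longleftrightarrow> j mod p = k mod p"
  unfolding omega_pow by (rule complex_root_unity_eq)

lemma omega_pow_eq1: "p \<ge> 1 \<Longrightarrow> omega p ^ j = 1 \<longleftrightarrow> p dvd j"
  unfolding omega_pow by (rule complex_root_unity_eq_1)

lemma omega_pow_p: "p \<ge> 1 \<Longrightarrow> omega p ^ p = 1"
  by (simp add: omega_pow_eq1)

lemma omega_pow_mod: "p \<ge> 1 \<Longrightarrow> omega p ^ (j mod p) = omega p ^ j"
  by (simp add: omega_pow_eq)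

lemma root_omega: "p \<ge> 1 \<Longrightarrow> z ^ p = 1 \<Longrightarrow> \<exists>j<p. z = omega p ^ j"
  using complex_roots_unity[of p] by (auto simp: omega_pow)

lemma omega_ne0: "omega p \<noteq> 0" by (simp add: omega_def)

lemma geo_roots: 
  assumes "p \<ge> 1" "(z::complex) ^ p = 1"
  shows "(\<Sum>k\<in>{1..<p}. z ^ k) = (if z = 1 then of_nat p - 1 else -1)"
proof -
  have s: "(\<Sum>k<p. z ^ k) = 1 + (\<Sum>k\<in>{1..<p}. z ^ k)"
    using assms(1) by (simp add: sum.atLeast1_atMost_eq lessThan_atLeast0 sum.atLeast_Suc_lessThan)
  show ?thesis
  proof (cases "z = 1")
    case True then show ?thesis using assms(1) by (simp add: of_nat_diff)
  next
    case False
    have "(\<Sum>k<p. z ^ k) = 0" using False assms by (simp add: geometric_sum)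
    then show ?thesis using s False by (simp add: algebra_simps eq_neg_iff_add_eq_0)
  qed
qed

lemma geom_poly: "([:1:] - monom 1 n :: int poly) = [:1,-1:] * (\<Sum>k<n. monom 1 k)"
proof (induction n)
  case 0 then show ?case by simp
next
  case (Suc n)
  have "[:1, -1:] * (\<Sum>k<Suc n. monom (1::int) k) = [:1:] - monom 1 n + [:1,-1:] * monom 1 n"
    using Suc by (simp add: algebra_simps)
  also have "[:1,-1:] * monom (1::int) n = monom 1 n - monom 1 (Suc n)"
    by (simp add: monom_Suc algebra_simps monom_altdef)
  finally show ?case by simp
qed

lemma h_poly_props:
  assumes "p \<ge> 2"
  shows "degree (h_poly p) + 2 \<le> p"
    and "\<And>j. j < p \<Longrightarrow> coeff (h_poly p) j - (if j = 0 then 0 else coeff (h_poly p) (j-1))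
             = (if j = 0 then int p else 0) - 1"
proof -
  define S where "S = (\<Sum>k<p. monom (1::int) k)"
  have d: "[:1, -1:] \<noteq> (0::int poly)" by simp
  have "([:1:] - monom 1 p) div [:1, -1:] = S"
    unfolding geom_poly S_def using d by (rule nonzero_mult_div_cancel_left)
  hence hp: "h_poly p = ([:int p:] - S) div [:1,-1:]" by (simp add: h_poly_def)
  have cS: "coeff S j = (if j < p then 1 else 0)" for j
    unfolding S_def by (simp add: coeff_sum)
  have "poly S 1 = int p" unfolding S_def by (simp add: poly_sum poly_monom)
  hence "poly ([:int p:] - S) 1 = 0" by simp
  hence "[:-1, 1:] dvd ([:int p:] - S)" using poly_eq_0_iff_dvd[of "[:int p:] - S" 1] by simp
  hence "[:1, -1:] dvd ([:int p:] - S)"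
  proof -
    have "[:1, -1:] = - [:-1, 1::int:]" by simp
    then show ?thesis using \<open>[:-1, 1:] dvd ([:int p:] - S)\<close> by (simp only: minus_dvd_iff)
  qed
  hence eq: "[:1,-1:] * h_poly p = [:int p:] - S" unfolding hp by (rule dvd_mult_div_cancel)
  have c: "coeff ([:1,-1:] * q) j = coeff q j - (if j = 0 then 0 else coeff q (j-1))" for q :: "int poly" and j
    by (cases j) (auto simp: coeff_pCons)
  show "j < p \<Longrightarrow> coeff (h_poly p) j - (if j = 0 then 0 else coeff (h_poly p) (j-1))
             = (if j = 0 then int p else 0) - 1" for j
  proof -
    assume "j < p"
    have "coeff (h_poly p) j - (if j = 0 then 0 else coeff (h_poly p) (j-1)) = coeff ([:int p:] - S) j"
      by (metis c eq)
    then show ?thesis using cS[of j] \<open>j < p\<close> by (simp add: coeff_pCons split: nat.splits)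
  qed
  have "coeff ([:int p:] - S) 0 \<noteq> 0" using assms cS[of 0] by simp
  hence "h_poly p \<noteq> 0" using eq by auto
  hence "degree ([:1,-1:] * h_poly p) = 1 + degree (h_poly p)"
    by (subst degree_mult_eq) auto
  moreover have "degree ([:int p:] - S) \<le> p - 1"
  proof (rule degree_le)
    show "\<forall>i>p - 1. coeff ([:int p:] - S) i = 0" using assms cS by (auto simp: coeff_pCons split: nat.splits)
  qed
  ultimately show "degree (h_poly p) + 2 \<le> p" using eq assms by simp
qed




locale pg = comm_group G for G (structure) + fixes p :: nat
  assumes pp: "prime p" and fin: "finite (carrier G)"
begin

lemma rep_one: assumes "is_rep G f" shows "f \<one> = 1"
proof -
  have "f \<one> = f \<one> * f \<one>" using assms(1) unfolding is_rep_def by (metis one_closed l_one)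
  moreover have "f \<one> \<noteq> 0" using assms(1) unfolding is_rep_def by auto
  ultimately show ?thesis by simp
qed

lemma rep_pow: assumes "is_rep G f" "x \<in> carrier G" shows "f (x [^] (n::nat)) = f x ^ n"
proof -
  show ?thesis
  proof (induction n)
    case 0 then show ?case using rep_one[OF assms(1)] by simp
  next
    case (Suc n) then show ?case using assms(1,2) unfolding is_rep_def
      by (simp add: nat_pow_Suc mult.commute)
  qed
qed

lemma rep_inv: assumes "is_rep G f" "x \<in> carrier G" shows "f (inv x) = inverse (f x)"
proof -
  have "f (x \<otimes> inv x) = f x * f (inv x)" using assms(1,2) unfolding is_rep_def by (meson inv_closed)
  hence "f x * f (inv x) = 1" using rep_one[OF assms(1)] assms(2) by simp
  thus ?thesis by (simp add: inverse_unique)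
qed


lemma p2: "p \<ge> 2" using pp by (simp add: prime_ge_2_nat)
lemma p1: "p \<ge> 1" using p2 by simp

lemma rep_root: assumes "is_rep G f" "rep_trivial G (psi_rep G p f)" "z \<in> carrier G"
  shows "f z ^ p = 1"
  using assms rep_pow[OF assms(1)] unfolding rep_trivial_def psi_rep_def by auto

lemma stepA:
  assumes rep: "is_rep G \<tau>" and triv: "rep_trivial G (psi_rep G p \<tau>)"
    and y: "y \<in> carrier G" "\<tau> y = omega p" and z: "z \<in> carrier G"
  shows "gr_mult G (gr_poly_eval G (h_poly p) y) (b_rep G p \<tau>) z = (if \<tau> z = 1 then int p else 0) - 1"
proof -
  define h where "h = h_poly p"
  define d where "d = degree h"
  have dp: "d + 2 \<le> p" using h_poly_props(1)[OF p2] unfolding d_def h_def .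
  define b where "b = b_rep G p \<tau>"
  have "gr_mult G (gr_poly_eval G h y) b z
      = (\<Sum>x\<in>carrier G. (\<Sum>i\<le>d. coeff h i * gr_basis G (y [^] i) x) * b (z \<otimes> inv x))"
    using z unfolding gr_mult_def gr_poly_eval_def d_def by simp
  also have "\<dots> = (\<Sum>i\<le>d. \<Sum>x\<in>carrier G. coeff h i * (gr_basis G (y [^] i) x * b (z \<otimes> inv x)))"
    by (simp add: sum_distrib_right sum.swap[of _ "carrier G"] mult.assoc)
  also have "\<dots> = (\<Sum>i\<le>d. coeff h i * b (z \<otimes> inv (y [^] i)))"
  proof (rule sum.cong[OF refl])
    fix i
    have "(\<Sum>x\<in>carrier G. coeff h i * (gr_basis G (y [^] i) x * b (z \<otimes> inv x)))
        = (\<Sum>x\<in>carrier G. if x = y [^] i then coeff h i * b (z \<otimes> inv x) else 0)"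
      using y by (intro sum.cong refl) (auto simp: gr_basis_def)
    also have "\<dots> = coeff h i * b (z \<otimes> inv (y [^] i))"
      using y fin by (simp add: sum.delta)
    finally show "(\<Sum>x\<in>carrier G. coeff h i * (gr_basis G (y [^] i) x * b (z \<otimes> inv x))) = coeff h i * b (z \<otimes> inv (y [^] i))" .
  qed
  finally have e1: "gr_mult G (gr_poly_eval G h y) b z = (\<Sum>i\<le>d. coeff h i * b (z \<otimes> inv (y [^] i)))" .
  have "\<tau> z ^ p = 1" using rep_root[OF rep triv z] .
  then obtain j where j: "j < p" "\<tau> z = omega p ^ j" using root_omega[OF p1] by blast
  have tz: "\<tau> (z \<otimes> inv (y [^] i)) = omega p ^ j * inverse (omega p ^ i)" for i :: nat
    using rep y z j unfolding is_rep_def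
    by (simp add: rep_inv[OF rep] rep_pow[OF rep])
  have bi: "b (z \<otimes> inv (y [^] i)) = (if j = i then 1 else 0) - (if j = i + 1 then 1 else 0)"
    if "i \<le> d" for i
  proof -
    have ip: "i < p" "i + 1 < p" using that dp by auto
    have w: "omega p ^ i \<noteq> 0" by (simp add: omega_ne0)
    have "(\<tau> (z \<otimes> inv (y [^] i)) = 1) \<longleftrightarrow> omega p ^ j = omega p ^ i"
      using w tz by (auto simp: field_simps)
    also have "\<dots> \<longleftrightarrow> j = i" using omega_pow_eq[OF p1] ip j by simp
    finally have A1: "(\<tau> (z \<otimes> inv (y [^] i)) = 1) \<longleftrightarrow> j = i" .
    have "(\<tau> (z \<otimes> inv (y [^] i)) = omega p) \<longleftrightarrow> omega p ^ j = omega p ^ (i+1)"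
      using w tz by (auto simp: field_simps)
    also have "\<dots> \<longleftrightarrow> j = i + 1" using omega_pow_eq[OF p1, of j "i+1"] ip j by simp
    finally have A2: "(\<tau> (z \<otimes> inv (y [^] i)) = omega p) \<longleftrightarrow> j = i + 1" .
    show ?thesis unfolding b_def b_rep_def using A1 A2 z y by simp
  qed
  have "(\<Sum>i\<le>d. coeff h i * b (z \<otimes> inv (y [^] i)))
      = (\<Sum>i\<le>d. (if i = j then coeff h i else 0)) - (\<Sum>i\<le>d. (if i + 1 = j then coeff h i else 0))"
  proof -
    have "(\<Sum>i\<le>d. coeff h i * b (z \<otimes> inv (y [^] i)))
      = (\<Sum>i\<le>d. (if i = j then coeff h i else 0) - (if i + 1 = j then coeff h i else 0))"
      by (intro sum.cong refl) (auto simp: bi)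
    then show ?thesis by (simp only: sum_subtractf)
  qed
  also have "(\<Sum>i\<le>d. (if i = j then coeff h i else 0)) = coeff h j"
    by (simp add: sum.delta' d_def coeff_eq_0 not_le)
  also have "(\<Sum>i\<le>d. (if i + 1 = j then coeff h i else 0)) = (if j = 0 then 0 else coeff h (j - 1))"
  proof (cases j)
    case 0 then show ?thesis by simp
  next
    case (Suc k)
    have "(\<Sum>i\<le>d. (if i + 1 = j then coeff h i else 0)) = (\<Sum>i\<le>d. (if i = k then coeff h i else 0))"
      using Suc by (intro sum.cong) auto
    also have "\<dots> = coeff h k" by (simp add: sum.delta' d_def coeff_eq_0 not_le)
    finally show ?thesis using Suc by simp
  qed
  also have "coeff h j - (if j = 0 then 0 else coeff h (j - 1)) = (if j = 0 then int p else 0) - 1"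
    using h_poly_props(2)[OF p2 j(1)] unfolding h_def .
  also have "(j = 0) \<longleftrightarrow> \<tau> z = 1" using j omega_pow_eq1[OF p1, of j] by auto
  finally show ?thesis using e1 unfolding h_def b_def by simp
qed

end



context pg begin

definition "Xs = {\<kappa>. (\<forall>x\<in>carrier G. \<kappa> x ^ p = (1::complex)) \<and>
   (\<forall>x\<in>carrier G. \<forall>y\<in>carrier G. \<kappa> (x \<otimes> y) = \<kappa> x * \<kappa> y) \<and> (\<forall>x. x \<notin> carrier G \<longrightarrow> \<kappa> x = 1)}"

definition "Pw = (\<lambda>x. x [^] p) ` carrier G"

lemma Xs_ne0: "\<kappa> \<in> Xs \<Longrightarrow> \<kappa> x \<noteq> 0"
proof (cases "x \<in> carrier G")
  case True
  assume "\<kappa> \<in> Xs"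
  then have "\<kappa> x ^ p = 1" using True unfolding Xs_def by auto
  then show ?thesis using p1 by (cases p) auto
next
  case False
  assume "\<kappa> \<in> Xs"
  then show ?thesis using False unfolding Xs_def by auto
qed

lemma Xs_rep: "\<kappa> \<in> Xs \<Longrightarrow> is_rep G \<kappa>"
  using Xs_ne0 unfolding is_rep_def Xs_def by auto

lemma Xs_finite: "finite Xs"
proof -
  have "Xs \<subseteq> (\<lambda>f x. if x \<in> carrier G then f x else 1) ` (PiE (carrier G) (\<lambda>_. {\<zeta>::complex. \<zeta> ^ p = 1}))"
  proof
    fix \<kappa> assume c: "\<kappa> \<in> Xs"
    have "\<kappa> = (\<lambda>x. if x \<in> carrier G then restrict \<kappa> (carrier G) x else 1)"
      using c unfolding Xs_def by auto
    moreover have "restrict \<kappa> (carrier G) \<in> PiE (carrier G) (\<lambda>_. {\<zeta>::complex. \<zeta> ^ p = 1})"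
      using c unfolding Xs_def by auto
    ultimately show "\<kappa> \<in> (\<lambda>f x. if x \<in> carrier G then f x else 1) ` (PiE (carrier G) (\<lambda>_. {\<zeta>::complex. \<zeta> ^ p = 1}))"
      by blast
  qed
  moreover have "finite (PiE (carrier G) (\<lambda>_. {\<zeta>::complex. \<zeta> ^ p = 1}))"
    using fin p1 by (intro finite_PiE) (auto intro: finite_roots_unity)
  ultimately show ?thesis by (meson finite_imageI finite_subset)
qed

lemma one_Xs: "(\<lambda>_. 1) \<in> Xs" unfolding Xs_def by auto

lemma Xs_mult: "\<kappa> \<in> Xs \<Longrightarrow> \<kappa>' \<in> Xs \<Longrightarrow> (\<lambda>x. \<kappa> x * \<kappa>' x) \<in> Xs"
  unfolding Xs_def by (auto simp: power_mult_distrib)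

lemma Xs_inv: "\<kappa> \<in> Xs \<Longrightarrow> (\<lambda>x. inverse (\<kappa> x)) \<in> Xs"
  unfolding Xs_def by (auto simp: power_inverse)

lemma orth_z:
  assumes z: "z \<in> carrier G" and c0: "\<kappa>0 \<in> Xs" "\<kappa>0 z \<noteq> 1"
  shows "(\<Sum>\<kappa>\<in>Xs. \<kappa> z) = 0"
proof -
  have bij: "bij_betw (\<lambda>\<kappa> x. \<kappa>0 x * \<kappa> x) Xs Xs"
  proof (rule bij_betw_byWitness[where f' = "\<lambda>\<kappa> x. inverse (\<kappa>0 x) * \<kappa> x"])
    show "\<forall>a\<in>Xs. (\<lambda>x. inverse (\<kappa>0 x) * (\<kappa>0 x * a x)) = a" using Xs_ne0[OF c0(1)] by (auto simp: field_simps)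
    show "\<forall>a\<in>Xs. (\<lambda>x. \<kappa>0 x * (inverse (\<kappa>0 x) * a x)) = a" using Xs_ne0[OF c0(1)] by (auto simp: field_simps)
    show "(\<lambda>\<kappa> x. \<kappa>0 x * \<kappa> x) ` Xs \<subseteq> Xs" using Xs_mult c0 by auto
    show "(\<lambda>\<kappa> x. inverse (\<kappa>0 x) * \<kappa> x) ` Xs \<subseteq> Xs" using Xs_mult Xs_inv c0 by auto
  qed
  have "(\<Sum>\<kappa>\<in>Xs. \<kappa>0 z * \<kappa> z) = (\<Sum>\<kappa>\<in>Xs. \<kappa> z)"
    using sum.reindex_bij_betw[OF bij, of "\<lambda>\<kappa>. \<kappa> z"] by simp
  hence "\<kappa>0 z * (\<Sum>\<kappa>\<in>Xs. \<kappa> z) = 1 * (\<Sum>\<kappa>\<in>Xs. \<kappa> z)" by (simp add: sum_distrib_left)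
  thus ?thesis using c0(2) by (metis mult_cancel_right)
qed

lemma orth_chi:
  assumes c: "\<kappa> \<in> Xs" "\<kappa> \<noteq> (\<lambda>_. 1)"
  shows "(\<Sum>z\<in>carrier G. \<kappa> z) = 0"
proof -
  have "\<exists>w\<in>carrier G. \<kappa> w \<noteq> 1"
  proof (rule ccontr)
    assume "\<not> (\<exists>w\<in>carrier G. \<kappa> w \<noteq> 1)"
    hence "\<kappa> = (\<lambda>_. 1)" using c(1) unfolding Xs_def by (intro ext) (metis (mono_tags, lifting) mem_Collect_eq)
    thus False using c(2) by simp
  qed
  then obtain w where w: "w \<in> carrier G" "\<kappa> w \<noteq> 1" by blast
  have bij: "bij_betw (\<lambda>z. w \<otimes> z) (carrier G) (carrier G)"
  proof (rule bij_betw_byWitness[where f' = "\<lambda>z. inv w \<otimes> z"])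
    show "\<forall>a\<in>carrier G. inv w \<otimes> (w \<otimes> a) = a" using w by (metis m_assoc inv_closed l_inv l_one)
    show "\<forall>a\<in>carrier G. w \<otimes> (inv w \<otimes> a) = a" using w by (metis m_assoc inv_closed r_inv l_one)
  qed (use w in auto)
  have "(\<Sum>z\<in>carrier G. \<kappa> (w \<otimes> z)) = (\<Sum>z\<in>carrier G. \<kappa> z)"
    using sum.reindex_bij_betw[OF bij, of \<kappa>] by simp
  moreover have "(\<Sum>z\<in>carrier G. \<kappa> (w \<otimes> z)) = \<kappa> w * (\<Sum>z\<in>carrier G. \<kappa> z)"
    using c w unfolding Xs_def by (simp add: sum_distrib_left)
  ultimately have "\<kappa> w * (\<Sum>z\<in>carrier G. \<kappa> z) = 1 * (\<Sum>z\<in>carrier G. \<kappa> z)" by simp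
  thus ?thesis using w(2) by (metis mult_cancel_right)
qed

lemma sum_all: "(\<Sum>z\<in>carrier G. \<Sum>\<kappa>\<in>Xs. \<kappa> z) = of_nat (card (carrier G))"
proof -
  have "(\<Sum>z\<in>carrier G. \<Sum>\<kappa>\<in>Xs. \<kappa> z) = (\<Sum>\<kappa>\<in>Xs. \<Sum>z\<in>carrier G. \<kappa> z)" by (rule sum.swap)
  also have "\<dots> = (\<Sum>\<kappa>\<in>Xs. if \<kappa> = (\<lambda>_. 1) then of_nat (card (carrier G)) else 0)"
    using orth_chi by (intro sum.cong) auto
  also have "\<dots> = of_nat (card (carrier G))" using Xs_finite one_Xs by (simp add: sum.delta')
  finally show ?thesis .
qed

lemma Pw_sub: "Pw \<subseteq> carrier G" unfolding Pw_def by auto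

lemma Xs_Pw: assumes "\<kappa> \<in> Xs" "z \<in> Pw" shows "\<kappa> z = 1"
proof -
  obtain x where x: "x \<in> carrier G" "z = x [^] p" using assms(2) unfolding Pw_def by blast
  have "\<kappa> z = \<kappa> x ^ p" using rep_pow[OF Xs_rep[OF assms(1)] x(1)] x(2) by simp
  thus ?thesis using assms(1) x(1) unfolding Xs_def by auto
qed

lemma sub_pow: "subgroup H G \<Longrightarrow> h \<in> H \<Longrightarrow> h [^] (n::nat) \<in> H"
proof (induction n)
  case 0 then show ?case by (simp add: subgroup.one_closed)
next
  case (Suc n) then show ?case by (simp add: subgroup.m_closed)
qed

lemma pow_split: assumes x: "x \<in> carrier G"
  shows "x [^] (n::nat) = x [^] (n mod p) \<otimes> (x [^] p) [^] (n div p)"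
proof -
  have "x [^] n = x [^] (n mod p + p * (n div p))" by simp
  also have "\<dots> = x [^] (n mod p) \<otimes> x [^] (p * (n div p))" using x by (simp add: nat_pow_mult)
  also have "x [^] (p * (n div p)) = (x [^] p) [^] (n div p)" using x by (simp add: nat_pow_pow)
  finally show ?thesis .
qed

lemma pow_inv: assumes x: "x \<in> carrier G" and d: "0 < d" "d < p"
  shows "\<exists>e q. x [^] (d * e) = x \<otimes> (x [^] p) [^] (q::nat)"
proof -
  have "\<not> p dvd d" using d by (auto dest: dvd_imp_le)
  hence "coprime p d" using pp by (simp add: prime_imp_coprime)
  hence "coprime d p" by (simp add: coprime_commute)
  then obtain e where "[d * e = Suc 0] (mod p)" using cong_solve_coprime_nat by blast
  hence "(d * e) mod p = 1" using p2 by (simp add: cong_def)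
  hence "x [^] (d * e) = x \<otimes> (x [^] p) [^] (d * e div p)"
    using pow_split[OF x, of "d*e"] x by simp
  thus ?thesis by blast
qed

lemma sub_closed: assumes H: "subgroup H G" and x: "x \<in> carrier G" "x [^] p \<in> H" "x [^] d \<in> H"
  and d: "0 < d" "d < p"
  shows "x \<in> H"
proof -
  obtain e q where eq: "x [^] (d * e) = x \<otimes> (x [^] p) [^] (q::nat)" using pow_inv[OF x(1) d] by blast
  have a: "x [^] (d * e) \<in> H" using sub_pow[OF H x(3)] x(1) by (simp add: nat_pow_pow)
  have b: "(x [^] p) [^] q \<in> H" using sub_pow[OF H x(2)] .
  have bc: "(x [^] p) [^] q \<in> carrier G" using x(1) by simp
  have "x = x [^] (d * e) \<otimes> inv ((x [^] p) [^] q)"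
    using eq x(1) bc by (simp add: m_assoc)
  also have "\<dots> \<in> H" using a b H by (simp add: subgroup.m_closed subgroup.m_inv_closed)
  finally show ?thesis .
qed

lemma memI: "i < p \<Longrightarrow> h \<in> H \<Longrightarrow> w = x [^] i \<otimes> h \<Longrightarrow> w \<in> {x [^] i \<otimes> h | i h. i < p \<and> h \<in> H}"
  by blast

lemma gen_sub: assumes H: "subgroup H G" and x: "x \<in> carrier G" "x [^] p \<in> H"
  shows "subgroup {x [^] i \<otimes> h | i h. i < p \<and> h \<in> H} G"
proof (rule subgroupI)
  have Hs: "H \<subseteq> carrier G" using H by (rule subgroup.subset)
  show "{x [^] i \<otimes> h | i h. i < p \<and> h \<in> H} \<subseteq> carrier G"
  proof
    fix w assume "w \<in> {x [^] i \<otimes> h | i h. i < p \<and> h \<in> H}"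
    then obtain i h where "w = x [^] i \<otimes> h" "i < p" "h \<in> H" by blast
    thus "w \<in> carrier G" using Hs x by auto
  qed
  have "\<one> \<in> {x [^] i \<otimes> h | i h. i < p \<and> h \<in> H}"
    by (rule memI[where i=0 and h="\<one>" and x=x]) (use p1 subgroup.one_closed[OF H] in auto)
  thus "{x [^] i \<otimes> h | i h. i < p \<and> h \<in> H} \<noteq> {}" by blast
  show "inv a \<in> {x [^] i \<otimes> h | i h. i < p \<and> h \<in> H}" if am: "a \<in> {x [^] i \<otimes> h | i h. i < p \<and> h \<in> H}" for a
  proof -
    obtain i h where a: "a = x [^] i \<otimes> h" "i < p" "h \<in> H" using am by blast
    have hc: "h \<in> carrier G" using a Hs by auto
    show ?thesis
    proof (cases "i = 0")
      case True
      hence "inv a = x [^] (0::nat) \<otimes> inv h" using a hc by simp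
      thus ?thesis using a H subgroup.m_inv_closed p1 by (intro memI[where i=0]) auto
    next
      case False
      have e1: "x [^] p = x [^] (p - i) \<otimes> x [^] i" using x a(2) by (simp add: nat_pow_mult)
      have "inv (x [^] i) = x [^] (p - i) \<otimes> inv (x [^] p)"
        unfolding e1 using x by (simp add: inv_mult m_assoc[symmetric])
      hence "inv a = x [^] (p - i) \<otimes> (inv (x [^] p) \<otimes> inv h)"
        using a x hc by (simp add: inv_mult m_assoc)
      moreover have "inv (x [^] p) \<otimes> inv h \<in> H" using H x a by (simp add: subgroup.m_closed subgroup.m_inv_closed)
      moreover have "p - i < p" using False a by simp
      ultimately show ?thesis by (intro memI)
    qed
  qed
  show "a \<otimes> b \<in> {x [^] i \<otimes> h | i h. i < p \<and> h \<in> H}"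
    if am: "a \<in> {x [^] i \<otimes> h | i h. i < p \<and> h \<in> H}" and bm: "b \<in> {x [^] i \<otimes> h | i h. i < p \<and> h \<in> H}" for a b
  proof -
    obtain i h where a: "a = x [^] i \<otimes> h" "i < p" "h \<in> H" using am by blast
    obtain j k where b: "b = x [^] j \<otimes> k" "j < p" "k \<in> H" using bm by blast
    have hc: "h \<in> carrier G" "k \<in> carrier G" using a b Hs by auto
    have "x [^] (i + j) = x [^] i \<otimes> x [^] j" using x by (simp add: nat_pow_mult)
    hence "a \<otimes> b = x [^] (i + j) \<otimes> (h \<otimes> k)"
      using a b hc x by (simp add: m_ac)
    also have "\<dots> = x [^] ((i + j) mod p) \<otimes> ((x [^] p) [^] ((i + j) div p) \<otimes> (h \<otimes> k))"
      using pow_split[OF x(1), of "i+j"] x hc by (simp add: m_assoc)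
    finally have "a \<otimes> b = x [^] ((i + j) mod p) \<otimes> ((x [^] p) [^] ((i + j) div p) \<otimes> (h \<otimes> k))" .
    moreover have "(x [^] p) [^] ((i + j) div p) \<otimes> (h \<otimes> k) \<in> H"
      using H a b sub_pow[OF H x(2)] by (simp add: subgroup.m_closed)
    moreover have "(i + j) mod p < p" using p1 by simp
    ultimately show ?thesis by (intro memI)
  qed
qed

lemma Pw_subgroup: "subgroup Pw G"
proof (rule subgroupI)
  show "Pw \<subseteq> carrier G" by (rule Pw_sub)
  have "\<one> [^] p \<in> Pw" unfolding Pw_def by (rule imageI) simp
  thus "Pw \<noteq> {}" by blast
  show "inv a \<in> Pw" if am: "a \<in> Pw" for a
  proof -
    obtain x where x: "x \<in> carrier G" "a = x [^] p" using am unfolding Pw_def by blast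
    have "inv a = (inv x) [^] p" using x by (simp add: nat_pow_inv)
    moreover have "inv x \<in> carrier G" using x by simp
    ultimately show ?thesis unfolding Pw_def by (rule image_eqI)
  qed
  show "a \<otimes> b \<in> Pw" if am: "a \<in> Pw" and bm: "b \<in> Pw" for a b
  proof -
    obtain x where x: "x \<in> carrier G" "a = x [^] p" using am unfolding Pw_def by blast
    obtain y where y: "y \<in> carrier G" "b = y [^] p" using bm unfolding Pw_def by blast
    have "a \<otimes> b = (x \<otimes> y) [^] p" using x y by (simp add: nat_pow_distrib)
    moreover have "x \<otimes> y \<in> carrier G" using x y by simp
    ultimately show ?thesis unfolding Pw_def by (rule image_eqI)
  qed
qed

lemma sepL: assumes z: "z \<in> carrier G" and zP: "z \<notin> Pw" shows "\<exists>\<kappa>\<in>Xs. \<kappa> z \<noteq> 1"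
proof -
  define S where "S = {H. subgroup H G \<and> Pw \<subseteq> H \<and> z \<notin> H}"
  have PS: "Pw \<in> S" unfolding S_def using Pw_subgroup zP by simp
  have finS: "finite S"
  proof (rule finite_subset)
    show "S \<subseteq> Pow (carrier G)" unfolding S_def by (auto dest: subgroup.subset)
    show "finite (Pow (carrier G))" using fin by simp
  qed
  define m where "m = Max (card ` S)"
  have "m \<in> card ` S" unfolding m_def using finS PS by (intro Max_in) auto
  then obtain H where HS: "H \<in> S" and Hm: "card H = m" by blast
  have Hmax: "card K \<le> card H" if "K \<in> S" for K
    using that finS Hm unfolding m_def by (simp add: Max_ge)
  have H: "subgroup H G" "Pw \<subseteq> H" "z \<notin> H" using HS unfolding S_def by auto
  have Hs: "H \<subseteq> carrier G" using H(1) by (rule subgroup.subset)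
  have powH: "x [^] p \<in> H" if "x \<in> carrier G" for x using H(2) that unfolding Pw_def by auto
  have cover: "\<exists>j<p. \<exists>h\<in>H. x = z [^] j \<otimes> h" if x: "x \<in> carrier G" for x
  proof (cases "x \<in> H")
    case True
    hence "x = z [^] (0::nat) \<otimes> x" using x by simp
    thus ?thesis using True p1 by (metis gr0I not_one_le_zero)
  next
    case False
    define H' where "H' = {x [^] i \<otimes> h | i h. i < p \<and> h \<in> H}"
    have H'sub: "subgroup H' G" unfolding H'_def using gen_sub[OF H(1) x powH[OF x]] .
    have "H \<subseteq> H'"
    proof
      fix h assume "h \<in> H"
      moreover have "h = x [^] (0::nat) \<otimes> h" using \<open>h \<in> H\<close> Hs by auto
      ultimately show "h \<in> H'" unfolding H'_def using p1 by fastforce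
    qed
    moreover have "x \<in> H'"
    proof -
      have "x = x [^] (1::nat) \<otimes> \<one>" using x by simp
      thus ?thesis unfolding H'_def using p2 H(1) subgroup.one_closed by fastforce
    qed
    ultimately have "H \<subset> H'" using False by blast
    moreover have "finite H'" using fin subgroup.subset[OF H'sub] by (rule finite_subset[rotated])
    ultimately have "card H < card H'" by (rule psubset_card_mono[rotated])
    hence "H' \<notin> S" using Hmax by fastforce
    moreover have "Pw \<subseteq> H'" using H(2) \<open>H \<subseteq> H'\<close> by blast
    ultimately have "z \<in> H'" using H'sub unfolding S_def by blast
    then obtain i h0 where zi: "z = x [^] i \<otimes> h0" "i < p" "h0 \<in> H" unfolding H'_def by blast
    have h0c: "h0 \<in> carrier G" using zi Hs by auto
    have "i \<noteq> 0"
    proof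
      assume "i = 0" hence "z = h0" using zi h0c by simp
      thus False using zi H(3) by simp
    qed
    then obtain e q where eq: "x [^] (i * e) = x \<otimes> (x [^] p) [^] (q::nat)"
      using pow_inv[OF x, of i] zi by auto
    have xi: "x [^] i = z \<otimes> inv h0" using zi h0c x by (simp add: m_assoc)
    have "x [^] (i * e) = (x [^] i) [^] e" using x by (simp add: nat_pow_pow)
    also have "\<dots> = z [^] e \<otimes> (inv h0) [^] e"
      unfolding xi using h0c z by (simp add: nat_pow_distrib)
    also have "\<dots> = z [^] (e mod p) \<otimes> ((z [^] p) [^] (e div p) \<otimes> (inv h0) [^] e)"
      using pow_split[OF z, of e] z h0c by (simp add: m_assoc)
    finally have "x \<otimes> (x [^] p) [^] q = z [^] (e mod p) \<otimes> ((z [^] p) [^] (e div p) \<otimes> (inv h0) [^] e)"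
      using eq by simp
    note E = this
    have "x = (x \<otimes> (x [^] p) [^] q) \<otimes> inv ((x [^] p) [^] q)" using x by (simp add: m_assoc)
    also have "\<dots> = z [^] (e mod p) \<otimes> ((z [^] p) [^] (e div p) \<otimes> (inv h0) [^] e \<otimes> inv ((x [^] p) [^] q))"
      unfolding E using x z h0c by (simp add: m_assoc)
    finally have "x = z [^] (e mod p) \<otimes> ((z [^] p) [^] (e div p) \<otimes> (inv h0) [^] e \<otimes> inv ((x [^] p) [^] q))" .
    moreover have "(z [^] p) [^] (e div p) \<otimes> (inv h0) [^] e \<otimes> inv ((x [^] p) [^] q) \<in> H"
      using H(1) sub_pow[OF H(1) powH[OF z]] sub_pow[OF H(1) subgroup.m_inv_closed[OF H(1) zi(3)]]
        sub_pow[OF H(1) powH[OF x]]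
      by (simp add: subgroup.m_closed subgroup.m_inv_closed)
    moreover have "e mod p < p" using p1 by simp
    ultimately show ?thesis by blast
  qed
  have uniq: "j = j'" if "j < p" "j' < p" "h \<in> H" "h' \<in> H" "z [^] j \<otimes> h = z [^] j' \<otimes> h'" for j j' h h'
  proof (rule ccontr)
    assume ne: "j \<noteq> j'"
    have key: "False" if "a < b" "b < p" "k \<in> H" "k' \<in> H" "z [^] a \<otimes> k = z [^] b \<otimes> k'" for a b k k'
    proof -
      have kc: "k \<in> carrier G" "k' \<in> carrier G" using that Hs by auto
      have "z [^] b = z [^] a \<otimes> z [^] (b - a)" using z that(1) by (simp add: nat_pow_mult)
      hence "z [^] a \<otimes> k = z [^] a \<otimes> (z [^] (b - a) \<otimes> k')" using that(5) z kc by (simp add: m_assoc)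
      hence kk: "k = z [^] (b - a) \<otimes> k'" using z kc by simp
      have "z [^] (b - a) = k \<otimes> inv k'" unfolding kk using z kc by (simp add: m_assoc)
      hence "z [^] (b - a) \<in> H" using H(1) that(3,4) by (simp add: subgroup.m_closed subgroup.m_inv_closed)
      hence "z \<in> H" using sub_closed[OF H(1) z powH[OF z], of "b - a"] that(1,2) by simp
      thus False using H(3) by simp
    qed
    show False
    proof (cases "j < j'")
      case True then show ?thesis using key that by blast
    next
      case False then have "j' < j" using ne by simp
      then show ?thesis using key[of j' j h' h] that by simp
    qed
  qed
  define J where "J w = (THE j. j < p \<and> (\<exists>h\<in>H. w = z [^] j \<otimes> h))" for w
  have ex1: "\<exists>!j. j < p \<and> (\<exists>h\<in>H. w = z [^] j \<otimes> h)" if wm: "w \<in> carrier G" for w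
  proof -
    obtain j where j: "j < p" "\<exists>h\<in>H. w = z [^] j \<otimes> h" using cover[OF wm] by blast
    show ?thesis
    proof (rule ex1I[of _ j])
      show "j < p \<and> (\<exists>h\<in>H. w = z [^] j \<otimes> h)" using j by simp
      fix j' assume j': "j' < p \<and> (\<exists>h\<in>H. w = z [^] j' \<otimes> h)"
      obtain h where h: "h \<in> H" "w = z [^] j \<otimes> h" using j by blast
      obtain h' where h': "h' \<in> H" "w = z [^] j' \<otimes> h'" using j' by blast
      show "j' = j" using uniq[of j' j h' h] j j' h h' by simp
    qed
  qed
  have J: "J w < p \<and> (\<exists>h\<in>H. w = z [^] J w \<otimes> h)" if "w \<in> carrier G" for w
    unfolding J_def by (rule theI'[OF ex1[OF that]])
  have Jeq: "J w = j" if jm: "w \<in> carrier G" "j < p" "h \<in> H" "w = z [^] j \<otimes> h" for w j h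
  proof -
    obtain h' where "h' \<in> H" "w = z [^] J w \<otimes> h'" using J[OF jm(1)] by blast
    thus ?thesis using uniq[of "J w" j h' h] J[OF jm(1)] jm by simp
  qed
  define \<kappa> where "\<kappa> w = (if w \<in> carrier G then omega p ^ J w else 1)" for w
  have "\<kappa> \<in> Xs"
    unfolding Xs_def
  proof (intro CollectI conjI ballI allI impI)
    fix x assume "x \<in> carrier G"
    show "\<kappa> x ^ p = 1" using \<open>x \<in> carrier G\<close> unfolding \<kappa>_def
      by (simp add: power_mult[symmetric] mult.commute[of _ p] power_mult omega_pow_p[OF p1])
  next
    fix x w assume xw: "x \<in> carrier G" "w \<in> carrier G"
    obtain h where h: "h \<in> H" "x = z [^] J x \<otimes> h" using J[OF xw(1)] by blast
    obtain k where k: "k \<in> H" "w = z [^] J w \<otimes> k" using J[OF xw(2)] by blast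
    have hk: "h \<in> carrier G" "k \<in> carrier G" using h k Hs by auto
    have "z [^] (J x + J w) = z [^] J x \<otimes> z [^] J w" using z by (simp add: nat_pow_mult)
    moreover have "x \<otimes> w = (z [^] J x \<otimes> h) \<otimes> (z [^] J w \<otimes> k)"
      using h(2) k(2) by (rule arg_cong2)
    ultimately have "x \<otimes> w = z [^] (J x + J w) \<otimes> (h \<otimes> k)"
      using hk z by (simp add: m_ac)
    also have "\<dots> = z [^] ((J x + J w) mod p) \<otimes> ((z [^] p) [^] ((J x + J w) div p) \<otimes> (h \<otimes> k))"
      using pow_split[OF z, of "J x + J w"] z hk by (simp add: m_assoc)
    finally have "J (x \<otimes> w) = (J x + J w) mod p"
      using xw H(1) h k sub_pow[OF H(1) powH[OF z]] p1 z hk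
      by (intro Jeq[of _ _ "(z [^] p) [^] ((J x + J w) div p) \<otimes> (h \<otimes> k)"])
         (auto simp: subgroup.m_closed)
    thus "\<kappa> (x \<otimes> w) = \<kappa> x * \<kappa> w" using xw unfolding \<kappa>_def
      by (simp add: omega_pow_mod[OF p1] power_add)
  next
    fix x assume "x \<notin> carrier G" thus "\<kappa> x = 1" unfolding \<kappa>_def by simp
  qed
  moreover have "\<kappa> z \<noteq> 1"
  proof -
    have "z = z [^] (1::nat) \<otimes> \<one>" using z by simp
    hence "J z = 1" using Jeq[OF z, of 1 \<one>] p2 subgroup.one_closed[OF H(1)] by simp
    thus ?thesis using z omega_pow_eq1[OF p1, of 1] p2 unfolding \<kappa>_def by auto
  qed
  ultimately show ?thesis by blast
qed

lemma sumXs: "z \<in> carrier G \<Longrightarrow> (\<Sum>\<kappa>\<in>Xs. \<kappa> z) = (if z \<in> Pw then of_nat (card Xs) else 0)"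
proof (cases "z \<in> Pw")
  case True
  then have "(\<Sum>\<kappa>\<in>Xs. \<kappa> z) = (\<Sum>\<kappa>\<in>Xs. 1)" using Xs_Pw by (intro sum.cong) auto
  then show ?thesis using True by simp
next
  case False
  assume z: "z \<in> carrier G"
  obtain k where "k \<in> Xs" "k z \<noteq> 1" using sepL[OF z False] by blast
  then show ?thesis using orth_z[OF z] False by simp
qed

lemma fA: assumes "z \<in> Pw" shows "card {x \<in> carrier G. x [^] p = z} = card {x \<in> carrier G. x [^] p = \<one>}"
  proof -
    obtain w where w: "w \<in> carrier G" "z = w [^] p" using assms unfolding Pw_def by blast
    have "bij_betw (\<lambda>x. inv w \<otimes> x) {x \<in> carrier G. x [^] p = z} {x \<in> carrier G. x [^] p = \<one>}"
    proof (rule bij_betw_byWitness[where f' = "\<lambda>x. w \<otimes> x"])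
      show "(\<lambda>x. inv w \<otimes> x) ` {x \<in> carrier G. x [^] p = z} \<subseteq> {x \<in> carrier G. x [^] p = \<one>}"
      proof (rule image_subsetI)
        fix x assume x: "x \<in> {x \<in> carrier G. x [^] p = z}"
        hence xc: "x \<in> carrier G" and xp: "x [^] p = z" by auto
        have "(inv w \<otimes> x) [^] p = inv w [^] p \<otimes> x [^] p" using w(1) xc by (intro nat_pow_distrib) auto
        also have "\<dots> = inv (w [^] p) \<otimes> w [^] p" using w xp by (simp add: nat_pow_inv)
        also have "\<dots> = \<one>" using w(1) by (intro l_inv) simp
        finally show "inv w \<otimes> x \<in> {x \<in> carrier G. x [^] p = \<one>}" using w(1) xc by simp
      qed
      show "(\<lambda>x. w \<otimes> x) ` {x \<in> carrier G. x [^] p = \<one>} \<subseteq> {x \<in> carrier G. x [^] p = z}"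
      proof (rule image_subsetI)
        fix x assume x: "x \<in> {x \<in> carrier G. x [^] p = \<one>}"
        hence xc: "x \<in> carrier G" and xp: "x [^] p = \<one>" by auto
        have "(w \<otimes> x) [^] p = w [^] p \<otimes> x [^] p" using w(1) xc by (rule nat_pow_distrib)
        also have "\<dots> = z" using w xc xp by simp
        finally show "w \<otimes> x \<in> {x \<in> carrier G. x [^] p = z}" using w(1) xc by simp
      qed
      show "\<forall>a\<in>{x \<in> carrier G. x [^] p = z}. w \<otimes> (inv w \<otimes> a) = a"
      proof
        fix a assume "a \<in> {x \<in> carrier G. x [^] p = z}"
        hence a: "a \<in> carrier G" by simp
        show "w \<otimes> (inv w \<otimes> a) = a" using w(1) a by (simp add: m_assoc[symmetric])
      qed
      show "\<forall>a\<in>{x \<in> carrier G. x [^] p = \<one>}. inv w \<otimes> (w \<otimes> a) = a"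
      proof
        fix a assume "a \<in> {x \<in> carrier G. x [^] p = \<one>}"
        hence a: "a \<in> carrier G" by simp
        show "inv w \<otimes> (w \<otimes> a) = a" using w(1) a by (simp add: m_assoc[symmetric])
      qed
    qed
    thus ?thesis by (rule bij_betw_same_card)
  qed
lemma count:
  assumes z: "z \<in> carrier G"
  shows "of_nat (card {x \<in> carrier G. x [^] p = z}) = (\<Sum>\<kappa>\<in>Xs. \<kappa> z)"
proof -
  define A where "A z = card {x \<in> carrier G. x [^] p = z}" for z
  have fA: "A z = A \<one>" if "z \<in> Pw" for z using fA[OF that] unfolding A_def .
  have A0: "A z = 0" if "z \<notin> Pw" for z
  proof -
    have "{x \<in> carrier G. x [^] p = z} = {}" using that unfolding Pw_def by auto
    thus ?thesis unfolding A_def by (simp only: card.empty)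
  qed
  have "carrier G = (\<Union>z\<in>Pw. {x \<in> carrier G. x [^] p = z})" unfolding Pw_def by auto
  hence "card (carrier G) = (\<Sum>z\<in>Pw. A z)" unfolding A_def
    using fin Pw_sub by (subst card_UN_disjoint[symmetric]) (auto intro: finite_subset)
  also have "\<dots> = card Pw * A \<one>" using fA by simp
  finally have c1: "card (carrier G) = card Pw * A \<one>" .
  have "of_nat (card (carrier G)) = (\<Sum>z\<in>carrier G. (if z \<in> Pw then of_nat (card Xs) else 0::complex))"
    unfolding sum_all[symmetric] by (rule sum.cong[OF refl sumXs])
  also have "\<dots> = of_nat (card Pw * card Xs)"
    using Pw_sub fin by (simp add: sum.If_cases Int_absorb1)
  finally have "card (carrier G) = card Pw * card Xs" by (simp only: of_nat_eq_iff)
  moreover have "card Pw > 0" unfolding Pw_def using fin by (simp add: card_gt_0_iff carrier_not_empty)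
  ultimately have "A \<one> = card Xs" using c1 by simp
  thus ?thesis using fA A0 sumXs[OF z] unfolding A_def by (cases "z \<in> Pw") auto
qed

end



lemma root_pow_1:
  assumes "prime p" "(\<zeta>::complex) ^ p = 1" "1 \<le> k" "k < p"
  shows "\<zeta> ^ k = 1 \<longleftrightarrow> \<zeta> = 1"
proof -
  have p1: "p \<ge> 1" using assms(3,4) by simp
  obtain j where j: "j < p" "\<zeta> = omega p ^ j" using root_omega[OF p1 assms(2)] by blast
  have "\<zeta> ^ k = 1 \<longleftrightarrow> p dvd j * k" using j omega_pow_eq1[OF p1, of "j*k"] by (simp add: power_mult)
  also have "\<dots> \<longleftrightarrow> p dvd j" using assms(1,3,4) by (auto simp: prime_dvd_mult_iff dest: dvd_imp_le)
  also have "\<dots> \<longleftrightarrow> \<zeta> = 1" using j omega_pow_eq1[OF p1, of j] by simp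
  finally show ?thesis .
qed

context pg begin

lemma Xs_nontriv: assumes "\<kappa> \<in> Xs" "\<kappa> \<noteq> (\<lambda>_. 1)" shows "\<exists>w\<in>carrier G. \<kappa> w \<noteq> 1"
proof (rule ccontr)
  assume "\<not> (\<exists>w\<in>carrier G. \<kappa> w \<noteq> 1)"
  hence "\<kappa> = (\<lambda>_. 1)" using assms(1) unfolding Xs_def by (intro ext) (metis (mono_tags, lifting) mem_Collect_eq)
  thus False using assms(2) by simp
qed

lemma main_count:
  assumes T_reps: "\<forall>\<tau>\<in>T. is_rep G \<tau> \<and> \<not> rep_trivial G \<tau> \<and> rep_trivial G (psi_rep G p \<tau>)"
    and T_complete: "\<forall>\<sigma>. is_rep G \<sigma> \<and> \<not> rep_trivial G \<sigma> \<and> rep_trivial G (psi_rep G p \<sigma>)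
                        \<longrightarrow> (\<exists>!\<tau>. \<tau> \<in> T \<and> rep_equiv G \<sigma> \<tau>)"
    and y_def: "\<forall>\<tau>\<in>T. y \<tau> \<in> carrier G \<and> \<tau> (y \<tau>) = omega p"
    and z: "z \<in> carrier G"
  shows "(\<Sum>\<kappa>\<in>Xs. \<kappa> z) = 1 + (\<Sum>\<tau>\<in>T. \<Sum>k\<in>{1..<p}. \<tau> z ^ k)"
proof -
  define ext where "ext = (\<lambda>(\<tau>::'a \<Rightarrow> complex, k::nat) x. if x \<in> carrier G then \<tau> x ^ k else 1)"
  have Troot: "\<tau> x ^ p = 1" if "\<tau> \<in> T" "x \<in> carrier G" for \<tau> x
    using rep_root[of \<tau> x] T_reps that by auto
  have Trep: "is_rep G \<tau>" if "\<tau> \<in> T" for \<tau> using T_reps that by auto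
  have inj: "inj_on ext (T \<times> {1..<p})"
  proof (rule inj_onI, clarify)
    fix \<tau> k \<sigma> m assume t: "\<tau> \<in> T" "k \<in> {1..<p}" "\<sigma> \<in> T" "m \<in> {1..<p}"
      and e: "ext (\<tau>, k) = ext (\<sigma>, m)"
    have e': "\<tau> x ^ k = \<sigma> x ^ m" if "x \<in> carrier G" for x
      using fun_cong[OF e, of x] that unfolding ext_def by simp
    have "rep_kernel G \<tau> = rep_kernel G \<sigma>"
      unfolding rep_kernel_def
    proof (intro Collect_cong conj_cong refl)
      fix x assume x: "x \<in> carrier G"
      have "\<tau> x = 1 \<longleftrightarrow> \<tau> x ^ k = 1" using root_pow_1[OF pp Troot[OF t(1) x], of k] t(2) by simp
      also have "\<dots> \<longleftrightarrow> \<sigma> x ^ m = 1" using e' x by simp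
      also have "\<dots> \<longleftrightarrow> \<sigma> x = 1" using root_pow_1[OF pp Troot[OF t(3) x], of m] t(4) by simp
      finally show "\<tau> x = 1 \<longleftrightarrow> \<sigma> x = 1" .
    qed
    hence eq: "rep_equiv G \<tau> \<sigma>" unfolding rep_equiv_def .
    have "\<exists>!\<tau>'. \<tau>' \<in> T \<and> rep_equiv G \<tau> \<tau>'" using T_complete T_reps t(1) by blast
    moreover have "rep_equiv G \<tau> \<tau>" unfolding rep_equiv_def by simp
    ultimately have ts: "\<tau> = \<sigma>" using eq t by blast
    have "omega p ^ k = omega p ^ m" using e'[of "y \<tau>"] y_def t(1) ts by simp
    hence "k mod p = m mod p" using omega_pow_eq[OF p1] by simp
    thus "\<tau> = \<sigma> \<and> k = m" using ts t(2,4) by simp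
  qed
  have img: "ext ` (T \<times> {1..<p}) = Xs - {\<lambda>_. 1}"
  proof
    show "ext ` (T \<times> {1..<p}) \<subseteq> Xs - {\<lambda>_. 1}"
    proof (rule image_subsetI)
      fix tk assume "tk \<in> T \<times> {1..<p}"
      then obtain \<tau> k where t: "\<tau> \<in> T" "k \<in> {1..<p}" and tk: "tk = (\<tau>, k)" by blast
      have A: "ext (\<tau>, k) \<in> Xs"
        unfolding Xs_def ext_def
        using Troot[OF t(1)] Trep[OF t(1)]
        by (auto simp: is_rep_def power_mult_distrib power_mult[symmetric] mult.commute[of k p] power_mult)
      have B: "ext (\<tau>, k) \<noteq> (\<lambda>_. 1)"
      proof
        assume "ext (\<tau>, k) = (\<lambda>_. 1)"
        hence "\<tau> (y \<tau>) ^ k = 1" using fun_cong[of _ _ "y \<tau>"] y_def t(1) unfolding ext_def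
          by (metis (mono_tags, lifting) case_prod_conv)
        hence "p dvd k" using y_def t(1) omega_pow_eq1[OF p1] by simp
        thus False using t(2) by (auto dest: dvd_imp_le)
      qed
      show "ext tk \<in> Xs - {\<lambda>_. 1}" using A B tk by simp
    qed
    show "Xs - {\<lambda>_. 1} \<subseteq> ext ` (T \<times> {1..<p})"
    proof
      fix \<kappa> assume k: "\<kappa> \<in> Xs - {\<lambda>_. 1}"
      obtain w where w: "w \<in> carrier G" "\<kappa> w \<noteq> 1" using Xs_nontriv k by blast
      have kr: "is_rep G \<kappa>" using Xs_rep k by simp
      have "\<not> rep_trivial G \<kappa>" using w unfolding rep_trivial_def by auto
      moreover have "rep_trivial G (psi_rep G p \<kappa>)"
        using k rep_pow[OF kr] unfolding rep_trivial_def psi_rep_def Xs_def by auto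
      ultimately obtain \<tau> where t: "\<tau> \<in> T" "rep_equiv G \<kappa> \<tau>" using T_complete kr by blast
      define yy where "yy = y \<tau>"
      have yy: "yy \<in> carrier G" "\<tau> yy = omega p" using y_def t(1) unfolding yy_def by auto
      have "\<kappa> yy ^ p = 1" using k yy unfolding Xs_def by auto
      then obtain k0 where k0: "k0 < p" "\<kappa> yy = omega p ^ k0" using root_omega[OF p1] by blast
      have kx: "\<kappa> x = \<tau> x ^ k0" if x: "x \<in> carrier G" for x
      proof -
        obtain j where j: "j < p" "\<tau> x = omega p ^ j" using root_omega[OF p1 Troot[OF t(1) x]] by blast
        have "\<tau> (x \<otimes> inv (yy [^] j)) = \<tau> x * inverse (\<tau> yy ^ j)"
          using x yy Trep[OF t(1)] rep_inv[OF Trep[OF t(1)]] rep_pow[OF Trep[OF t(1)]]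
          unfolding is_rep_def by simp
        also have "\<dots> = 1" using j yy omega_ne0 by simp
        finally have "x \<otimes> inv (yy [^] j) \<in> rep_kernel G \<tau>" unfolding rep_kernel_def using x yy by simp
        hence "x \<otimes> inv (yy [^] j) \<in> rep_kernel G \<kappa>" using t(2) unfolding rep_equiv_def by simp
        hence "\<kappa> (x \<otimes> inv (yy [^] j)) = 1" unfolding rep_kernel_def by simp
        moreover have "\<kappa> (x \<otimes> inv (yy [^] j)) = \<kappa> x * inverse (\<kappa> yy ^ j)"
          using x yy kr rep_inv[OF kr] rep_pow[OF kr] unfolding is_rep_def by simp
        ultimately have "\<kappa> x = \<kappa> yy ^ j"
          using k0 omega_ne0 by (simp add: field_simps)
        also have "\<dots> = \<tau> x ^ k0" using k0 j by (simp add: power_mult[symmetric] mult.commute)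
        finally show ?thesis .
      qed
      have "k0 \<noteq> 0" proof assume "k0 = 0" thus False using kx[OF w(1)] w(2) by simp qed
      moreover have "\<kappa> = ext (\<tau>, k0)"
      proof
        fix x show "\<kappa> x = ext (\<tau>, k0) x"
          using kx k unfolding ext_def Xs_def by (cases "x \<in> carrier G") auto
      qed
      ultimately show "\<kappa> \<in> ext ` (T \<times> {1..<p})" using t(1) k0(1) by force
    qed
  qed
  have bij: "bij_betw ext (T \<times> {1..<p}) (Xs - {\<lambda>_. 1})" using inj img unfolding bij_betw_def by simp
  have "(\<Sum>\<kappa>\<in>Xs. \<kappa> z) = 1 + (\<Sum>\<kappa>\<in>Xs - {\<lambda>_. 1}. \<kappa> z)"
    using Xs_finite one_Xs by (simp add: sum.remove)
  also have "(\<Sum>\<kappa>\<in>Xs - {\<lambda>_. 1}. \<kappa> z) = (\<Sum>tk\<in>T \<times> {1..<p}. ext tk z)"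
    using sum.reindex_bij_betw[OF bij, of "\<lambda>\<kappa>. \<kappa> z"] by simp
  also have "\<dots> = (\<Sum>\<tau>\<in>T. \<Sum>k\<in>{1..<p}. \<tau> z ^ k)"
    using z by (simp add: sum.cartesian_product ext_def split_beta)
  finally show ?thesis .
qed

end



theorem mainTheorem6:
  fixes G :: "('a, 'b) monoid_scheme" and p e :: nat
    and T :: "('a \<Rightarrow> complex) set" and y :: "('a \<Rightarrow> complex) \<Rightarrow> 'a"
  assumes "prime p" and "e \<ge> 1"
    and "comm_group G" and "finite (carrier G)" and "card (carrier G) = p ^ e"
    and T_reps: "\<forall>\<tau>\<in>T. is_rep G \<tau> \<and> \<not> rep_trivial G \<tau> \<and> rep_trivial G (psi_rep G p \<tau>)"
    and T_complete: "\<forall>\<sigma>. is_rep G \<sigma> \<and> \<not> rep_trivial G \<sigma> \<and> rep_trivial G (psi_rep G p \<sigma>)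
                        \<longrightarrow> (\<exists>!\<tau>. \<tau> \<in> T \<and> rep_equiv G \<sigma> \<tau>)"
    and y_def: "\<forall>\<tau>\<in>T. y \<tau> \<in> carrier G \<and> \<tau> (y \<tau>) = omega p"
  shows "psi_gr G p (b_one G) =
           gr_add (b_one G)
             (gr_sum (\<lambda>\<tau>. gr_mult G (gr_poly_eval G (h_poly p) (y \<tau>)) (b_rep G p \<tau>)) T)"
proof -
  interpret pg G p
    using assms(1,3,4) by (simp add: pg_def pg_axioms_def)
  show ?thesis
  proof
    fix z
    show "psi_gr G p (b_one G) z =
           gr_add (b_one G)
             (gr_sum (\<lambda>\<tau>. gr_mult G (gr_poly_eval G (h_poly p) (y \<tau>)) (b_rep G p \<tau>)) T) z"
    proof (cases "z \<in> carrier G")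
      case False
      have "psi_gr G p (b_one G) z = 0"
        unfolding psi_gr_def using False by (intro sum.neutral) (auto simp: b_one_def)
      moreover have "gr_mult G f g z = 0" for f g using False unfolding gr_mult_def by simp
      ultimately show ?thesis using False unfolding gr_add_def gr_sum_def b_one_def by simp
    next
      case z: True
      have L: "psi_gr G p (b_one G) z = int (card {x \<in> carrier G. x [^]\<^bsub>G\<^esub> p = z})"
      proof -
        have "psi_gr G p (b_one G) z = (\<Sum>x\<in>carrier G. if x [^]\<^bsub>G\<^esub> p = z then 1 else 0)"
          unfolding psi_gr_def b_one_def by (intro sum.cong) auto
        also have "\<dots> = int (card {x \<in> carrier G. x [^]\<^bsub>G\<^esub> p = z})"
          using fin by (simp add: sum.If_cases Int_def)
        finally show ?thesis .
      qed
      have R: "gr_add (b_one G)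
             (gr_sum (\<lambda>\<tau>. gr_mult G (gr_poly_eval G (h_poly p) (y \<tau>)) (b_rep G p \<tau>)) T) z
           = 1 + (\<Sum>\<tau>\<in>T. (if \<tau> z = 1 then int p else 0) - 1)"
        unfolding gr_add_def gr_sum_def b_one_def using z
        by (simp add: stepA T_reps y_def cong: sum.cong)
      have "complex_of_int (int (card {x \<in> carrier G. x [^]\<^bsub>G\<^esub> p = z}))
          = 1 + (\<Sum>\<tau>\<in>T. \<Sum>k\<in>{1..<p}. \<tau> z ^ k)"
        using count[OF z] main_count[OF T_reps T_complete y_def z] by simp
      also have "\<dots> = 1 + (\<Sum>\<tau>\<in>T. (if \<tau> z = 1 then of_nat p - 1 else -1))"
        using geo_roots[OF p1] rep_root[OF _ _ z] T_reps by (intro arg_cong2[where f="(+)"] sum.cong) auto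
      also have "\<dots> = complex_of_int (1 + (\<Sum>\<tau>\<in>T. (if \<tau> z = 1 then int p else 0) - 1))"
        by (simp add: of_int_sum) (intro sum.cong refl, simp)
      finally have "int (card {x \<in> carrier G. x [^]\<^bsub>G\<^esub> p = z}) = 1 + (\<Sum>\<tau>\<in>T. (if \<tau> z = 1 then int p else 0) - 1)"
        by (simp only: of_int_eq_iff)
      thus ?thesis using L R by simp
    qed
  qed
qed



end
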